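(* Let $\sigma>0$, $\lambda>0$, $\kappa_1\in(0,1)$ and $t_1\in(0,\sigma)$. For every $\gamma_1\ge\kappa_1/(\sigma-t_1)$, any solution $(x(t),y(t))$ on $[0,\sigma]$ of the system \[ x'=y,\qquad y'=-\lambda a^+(t)g(x) \] with $x(t_1)\le\kappa_1$ and $y(t_1)\le-\gamma_1$ satisfies $x(\sigma)\le0$ and $y(\sigma)\le-\gamma_1$.
   Context: $a\in L^1(0,\sigma)$ is a real function with positive part $a^+$. $g\colon\mathbb{R}\to[0,+\infty)$ is the extension by zero outside $[0,1]$ of a locally Lipschitz continuous function $g\colon[0,1]\to[0,+\infty)$ with $g(0)=g(1)=0$, $g(s)>0$ for $0<s<1$ and $\lim_{s\to0^+}g(s)/s=0$. Solutions are in the Carathéodory sense. *)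

theory Defs
  imports "HOL-Analysis.Analysis"
begin

definition admissible_g :: "(real \<Rightarrow> real) \<Rightarrow> bool" where
  "admissible_g g \<longleftrightarrow>
     (\<forall>s. s \<notin> {0..1} \<longrightarrow> g s = 0) \<and>
     (\<forall>s. 0 \<le> g s) \<and>
     (\<forall>u\<in>{0..1}. \<exists>r>0. \<exists>L. L-lipschitz_on ({0..1} \<inter> cball u r) g) \<and>
     g 0 = 0 \<and> g 1 = 0 \<and>
     (\<forall>s. 0 < s \<and> s < 1 \<longrightarrow> 0 < g s) \<and>
     ((\<lambda>s. g s / s) \<longlongrightarrow> 0) (at_right 0)"

text \<open>Caratheodory solution on [0,sigma] of x' = y, y' = - lambda a^+(t) g(x),
written in the equivalent integral form (x, y absolutely continuous with the
equations holding almost everywhere).\<close>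
definition cara_solution ::
  "real \<Rightarrow> real \<Rightarrow> (real \<Rightarrow> real) \<Rightarrow> (real \<Rightarrow> real) \<Rightarrow> (real \<Rightarrow> real) \<Rightarrow> (real \<Rightarrow> real) \<Rightarrow> bool"
where
  "cara_solution \<sigma> lam a g x y \<longleftrightarrow>
     continuous_on {0..\<sigma>} x \<and> continuous_on {0..\<sigma>} y \<and>
     set_integrable lborel {0..\<sigma>} (\<lambda>s. max 0 (a s) * g (x s)) \<and>
     (\<forall>t\<in>{0..\<sigma>}. x t = x 0 + (LBINT s=0..t. y s)) \<and>
     (\<forall>t\<in>{0..\<sigma>}. y t = y 0 - lam * (LBINT s=0..t. max 0 (a s) * g (x s)))"

end

theory Submission
  imports Defs
begin

theorem lemma2p1:
  fixes \<sigma> lam \<kappa>\<^sub>1 t\<^sub>1 \<gamma>\<^sub>1 :: real and a g x y :: "real \<Rightarrow> real"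
  assumes "\<sigma> > 0" and "lam > 0" and "0 < \<kappa>\<^sub>1" and "\<kappa>\<^sub>1 < 1"
    and "0 < t\<^sub>1" and "t\<^sub>1 < \<sigma>"
    and "set_integrable lborel {0..\<sigma>} a"
    and "admissible_g g"
    and "\<gamma>\<^sub>1 \<ge> \<kappa>\<^sub>1 / (\<sigma> - t\<^sub>1)"
    and "cara_solution \<sigma> lam a g x y"
    and "x t\<^sub>1 \<le> \<kappa>\<^sub>1" and "y t\<^sub>1 \<le> - \<gamma>\<^sub>1"
  shows "x \<sigma> \<le> 0 \<and> y \<sigma> \<le> - \<gamma>\<^sub>1"
proof -
  define h where "h = (\<lambda>s. max 0 (a s) * g (x s))"
  have gnn: "\<And>s. 0 \<le> g s" using assms(8) unfolding admissible_g_def by blast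
  have hnn: "\<And>s. 0 \<le> h s" unfolding h_def using gnn by simp
  have C: "continuous_on {0..\<sigma>} y" "set_integrable lborel {0..\<sigma>} h"
    "\<forall>t\<in>{0..\<sigma>}. x t = x 0 + (LBINT s=0..t. y s)"
    "\<forall>t\<in>{0..\<sigma>}. y t = y 0 - lam * (LBINT s=0..t. h s)"
    using assms(10) unfolding cara_solution_def h_def by blast+
  have hint: "interval_lebesgue_integrable lborel 0 t h" if "t \<in> {0..\<sigma>}" for t
    unfolding interval_lebesgue_integrable_def using that
    using that apply simp
    apply (rule set_integrable_subset[OF C(2)])
    using that by (auto simp: einterval_iff)
  have yint: "interval_lebesgue_integrable lborel 0 t y" if "t \<in> {0..\<sigma>}" for t
    using interval_integrable_continuous_on[of 0 t y] continuous_on_subset[OF C(1), of "{0..t}"] that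
    by (simp add: zero_ereal_def)
  have ymon: "y t \<le> y t\<^sub>1" if t: "t \<in> {t\<^sub>1..\<sigma>}" for t
  proof -
    have s: "(LBINT s=0..t\<^sub>1. h s) + (LBINT s=t\<^sub>1..t. h s) = (LBINT s=0..t. h s)"
      apply (rule interval_integral_sum)
      using t assms(5) hint[of t] by (auto simp: min_def max_def)
    have "(LBINT s=t\<^sub>1..t. h s) = (LBINT s:{t\<^sub>1..t}. h s)"
      using t by (intro interval_integral_Icc) auto
    also have "\<dots> \<ge> 0"
      unfolding set_lebesgue_integral_def
      by (rule integral_nonneg_AE) (auto simp: hnn indicator_def)
    finally have "(LBINT s=t\<^sub>1..t. h s) \<ge> 0" .
    with s have "(LBINT s=0..t\<^sub>1. h s) \<le> (LBINT s=0..t. h s)" by linarith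
    moreover have "y t = y 0 - lam * (LBINT s=0..t. h s)" "y t\<^sub>1 = y 0 - lam * (LBINT s=0..t\<^sub>1. h s)"
      using t assms(5,6) by (auto intro!: bspec[OF C(4)])
    ultimately show ?thesis using assms(2)
      by (metis diff_left_mono mult_left_mono less_imp_le)
  qed
  have yle: "y t \<le> - \<gamma>\<^sub>1" if "t \<in> {t\<^sub>1..\<sigma>}" for t
    using ymon[OF that] assms(12) by linarith
  have s: "(LBINT s=0..t\<^sub>1. y s) + (LBINT s=t\<^sub>1..\<sigma>. y s) = (LBINT s=0..\<sigma>. y s)"
    apply (rule interval_integral_sum)
    using assms(5,6) yint[of \<sigma>] assms(1) by (auto simp: min_def max_def)
  have "(LBINT s=t\<^sub>1..\<sigma>. y s) \<le> (LBINT s=t\<^sub>1..\<sigma>. - \<gamma>\<^sub>1)"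
  proof -
    have "(LBINT s=t\<^sub>1..\<sigma>. y s) = (LBINT s:{t\<^sub>1..\<sigma>}. y s)"
      using assms(6) by (intro interval_integral_Icc) auto
    also have "\<dots> \<le> (LBINT s:{t\<^sub>1..\<sigma>}. - \<gamma>\<^sub>1)"
      apply (rule set_integral_mono)
        apply (rule borel_integrable_atLeastAtMost')
        apply (rule continuous_on_subset[OF C(1)])
      using assms(5) apply auto[1]
       apply (rule borel_integrable_atLeastAtMost', rule continuous_on_const)
      using yle by auto
    also have "\<dots> = (LBINT s=t\<^sub>1..\<sigma>. - \<gamma>\<^sub>1)"
      using assms(6) by (intro interval_integral_Icc[symmetric]) auto
    finally show ?thesis .
  qed
  also have "\<dots> = - \<gamma>\<^sub>1 * (\<sigma> - t\<^sub>1)" by simp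
  finally have I: "(LBINT s=t\<^sub>1..\<sigma>. y s) \<le> - \<gamma>\<^sub>1 * (\<sigma> - t\<^sub>1)" .
  have "x \<sigma> = x t\<^sub>1 + (LBINT s=t\<^sub>1..\<sigma>. y s)"
  proof -
    have "x \<sigma> = x 0 + (LBINT s=0..\<sigma>. y s)" "x t\<^sub>1 = x 0 + (LBINT s=0..t\<^sub>1. y s)"
      using assms(1,5,6) by (auto intro!: bspec[OF C(3)])
    then show ?thesis using s by linarith
  qed
  moreover have "\<kappa>\<^sub>1 \<le> \<gamma>\<^sub>1 * (\<sigma> - t\<^sub>1)"
    using assms(9,6) by (simp add: divide_le_eq)
  ultimately have "x \<sigma> \<le> 0" using I assms(11) by linarith
  moreover have "y \<sigma> \<le> - \<gamma>\<^sub>1" using yle assms(1,6) by auto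
  ultimately show ?thesis by blast
qed

end
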